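(* Let $f:\mathbb{R}^N\to\mathbb{R}$ be differentiable, let $w^t\in\Delta^N$ have all entries positive, and suppose $M_t:=\max_i(\Pi^t\nabla f^t)_i>0$; set $\eta_{t,\max}=1/M_t$. Let $\eta_t=\gamma_t\eta_{t,\max}$ with $\gamma_t\in(0,1)$, and let $$w^{t+1}=w^t-\eta_t\,w^t\odot\Pi^t\nabla f^t.$$ Then for any $u\in\Delta^N$, $$D(u\,|\,w^{t+1})-D(u\,|\,w^t)\le\eta_t\,u\cdot(\Pi^t\nabla f^t)+C_{\gamma_t}\eta_t^2\,u\cdot(\Pi^t\nabla f^t)^2,$$ where $C_{\gamma}=\gamma^{-2}\log\!\big(e^{-\gamma}/(1-\gamma)\big)$.
   Context: $\Delta^N=\{w\in\mathbb{R}^N : \sum_i w_i=1,\ w_i\ge 0\}$. Write $\nabla f^t=\nabla f(w^t)$ and $(\Pi^t\nabla f^t)_i=\nabla_i f(w^t)-w^t\cdot\nabla f(w^t)$. $\odot$ denotes componentwise multiplication; $(\Pi^t\nabla f^t)^2$ is the componentwise square. The relative entropy is $D(u\,|\,w)=\sum_{i:\,u_i\ne0}u_i\log(u_i/w_i)$. *)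

theory Defs
  imports "HOL-Analysis.Analysis"
begin

definition prob_simplex :: "(real^'n) set" where
  "prob_simplex = {w. (\<Sum>i\<in>UNIV. w $ i) = 1 \<and> (\<forall>i. 0 \<le> w $ i)}"

definition grad :: "(real^'n \<Rightarrow> real) \<Rightarrow> real^'n \<Rightarrow> real^'n" where
  "grad f w = (THE g. (f has_derivative (\<lambda>h. g \<bullet> h)) (at w))"

definition proj_grad :: "(real^'n \<Rightarrow> real) \<Rightarrow> real^'n \<Rightarrow> real^'n" where
  "proj_grad f w = (\<chi> i. grad f w $ i - w \<bullet> grad f w)"

definition rel_entropy :: "real^'n \<Rightarrow> real^'n \<Rightarrow> real" where
  "rel_entropy u w = (\<Sum>i\<in>{i. u $ i \<noteq> 0}. u $ i * ln (u $ i / w $ i))"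

definition C_gamma :: "real \<Rightarrow> real" where
  "C_gamma \<gamma> = ln (exp (- \<gamma>) / (1 - \<gamma>)) / \<gamma>\<^sup>2"

end

theory Submission
  imports Defs
begin

lemma aux_k:
  fixes x :: real assumes "0 \<le> x" "x < 1"
  shows "0 \<le> x\<^sup>2/(1-x) + 2*x + 2*ln(1-x)"
proof -
  have "(\<lambda>t. t\<^sup>2/(1-t) + 2*t + 2*ln(1-t)) 0 \<le> (\<lambda>t. t\<^sup>2/(1-t) + 2*t + 2*ln(1-t)) x"
  proof (rule DERIV_nonneg_imp_nondecreasing[OF assms(1)])
    fix t :: real assume t: "0 \<le> t" "t \<le> x"
    hence t1: "t < 1" using assms by simp
    have "((\<lambda>t. t\<^sup>2/(1-t) + 2*t + 2*ln(1-t)) has_real_derivative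
       ((2*t*(1-t) + t\<^sup>2)/(1-t)\<^sup>2 + 2 + 2*(-1/(1-t)))) (at t)"
      using t1 by (auto intro!: derivative_eq_intros simp: power2_eq_square field_simps)
    moreover have "(2*t*(1-t) + t\<^sup>2)/(1-t)\<^sup>2 + 2 + 2*(-1/(1-t)) = t\<^sup>2/(1-t)\<^sup>2"
      using t1 by (simp add: divide_simps power2_eq_square) (simp add: algebra_simps)
    ultimately show "\<exists>y. ((\<lambda>t. t\<^sup>2/(1-t) + 2*t + 2*ln(1-t)) has_real_derivative y) (at t) \<and> y \<ge> 0"
      by auto
  qed
  thus ?thesis by simp
qed

lemma aux_mono:
  fixes x y :: real assumes "0 < x" "x \<le> y" "y < 1"
  shows "(-ln(1-x)-x)/x\<^sup>2 \<le> (-ln(1-y)-y)/y\<^sup>2"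
proof -
  have "(\<lambda>t. (-ln(1-t)-t)/t\<^sup>2) x \<le> (\<lambda>t. (-ln(1-t)-t)/t\<^sup>2) y"
proof (rule DERIV_nonneg_imp_nondecreasing[OF assms(2)])
  fix t :: real assume t: "x \<le> t" "t \<le> y"
  hence t1: "t < 1" "0 < t" using assms by auto
  have "((\<lambda>t. (-ln(1-t)-t)/t\<^sup>2) has_real_derivative
     (((1/(1-t) - 1) * t\<^sup>2 - (-ln(1-t)-t) * (2*t)) / (t\<^sup>2)\<^sup>2)) (at t)"
    using t1 by (auto intro!: derivative_eq_intros simp: power2_eq_square)
  moreover have "((1/(1-t) - 1) * t\<^sup>2 - (-ln(1-t)-t) * (2*t)) / (t\<^sup>2)\<^sup>2
      = (t\<^sup>2/(1-t) + 2*t + 2*ln(1-t)) / t^3"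
    using t1 by (simp add: field_simps power2_eq_square power3_eq_cube)
  moreover have "0 \<le> (t\<^sup>2/(1-t) + 2*t + 2*ln(1-t)) / t^3"
    using aux_k[of t] t1 by simp
  ultimately show "\<exists>d. ((\<lambda>t. (-ln(1-t)-t)/t\<^sup>2) has_real_derivative d) (at t) \<and> d \<ge> 0"
    by auto
qed
  thus ?thesis by simp
qed

lemma aux_neg:
  fixes x :: real assumes "x \<le> 0"
  shows "-ln(1-x) - x \<le> x\<^sup>2/2"
proof -
  have "(\<lambda>y. ln(1+y) - y + y\<^sup>2/2) 0 \<le> (\<lambda>y. ln(1+y) - y + y\<^sup>2/2) (-x)"
  proof (rule DERIV_nonneg_imp_nondecreasing[of 0 "-x" "\<lambda>y. ln(1+y) - y + y\<^sup>2/2"])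
    show "0 \<le> -x" using assms by simp
    fix t :: real assume t: "0 \<le> t" "t \<le> -x"
    have "((\<lambda>y. ln(1+y) - y + y\<^sup>2/2) has_real_derivative (1/(1+t) - 1 + t)) (at t)"
      using t by (auto intro!: derivative_eq_intros)
    moreover have "1/(1+t) - 1 + t = t\<^sup>2/(1+t)" using t by (simp add: field_simps power2_eq_square)
    ultimately show "\<exists>d. ((\<lambda>y. ln(1+y) - y + y\<^sup>2/2) has_real_derivative d) (at t) \<and> d \<ge> 0"
      using t by auto
  qed
  thus ?thesis by simp
qed

lemma aux_half:
  fixes x :: real assumes "0 \<le> x" "x < 1"
  shows "x\<^sup>2/2 \<le> -ln(1-x) - x"
proof -
  have "(\<lambda>y. -ln(1-y) - y - y\<^sup>2/2) 0 \<le> (\<lambda>y. -ln(1-y) - y - y\<^sup>2/2) x"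
  proof (rule DERIV_nonneg_imp_nondecreasing[OF assms(1)])
    fix t :: real assume t: "0 \<le> t" "t \<le> x"
    hence t1: "t < 1" using assms by simp
    have "((\<lambda>y. -ln(1-y) - y - y\<^sup>2/2) has_real_derivative (1/(1-t) - 1 - t)) (at t)"
      using t1 by (auto intro!: derivative_eq_intros)
    moreover have "1/(1-t) - 1 - t = t\<^sup>2/(1-t)" using t1 by (simp add: field_simps power2_eq_square)
    ultimately show "\<exists>d. ((\<lambda>y. -ln(1-y) - y - y\<^sup>2/2) has_real_derivative d) (at t) \<and> d \<ge> 0"
      using t1 t by auto
  qed
  thus ?thesis by simp
qed

lemma aux_key:
  fixes x g :: real assumes "x \<le> g" "0 < g" "g < 1"
  shows "-ln(1-x) \<le> x + ((-ln(1-g)-g)/g\<^sup>2) * x\<^sup>2"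
proof (cases "x = 0")
  case True thus ?thesis by simp
next
  case False
  show ?thesis
  proof (cases "x > 0")
    case True
    have "(-ln(1-x)-x)/x\<^sup>2 \<le> (-ln(1-g)-g)/g\<^sup>2" using aux_mono[of x g] assms True by simp
    hence "(-ln(1-x)-x)/x\<^sup>2 * x\<^sup>2 \<le> (-ln(1-g)-g)/g\<^sup>2 * x\<^sup>2"
      by (rule mult_right_mono) simp
    thus ?thesis using True by simp
  next
    case f2: False
    have "1/2 \<le> (-ln(1-g)-g)/g\<^sup>2" using aux_half[of g] assms by (simp add: field_simps)
    hence "x\<^sup>2/2 \<le> (-ln(1-g)-g)/g\<^sup>2 * x\<^sup>2" by (metis mult.commute mult_left_mono times_divide_eq_right mult_1_right zero_le_power2)
    thus ?thesis using aux_neg[of x] f2 by linarith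
  qed
qed

theorem theoremA1:
  fixes f :: "real^'n \<Rightarrow> real" and w u :: "real^'n" and \<gamma> M \<eta> :: real and w' :: "real^'n"
  assumes diff: "\<And>x. f differentiable (at x)"
    and w_simplex: "w \<in> prob_simplex"
    and w_pos: "\<forall>i. 0 < w $ i"
    and M_def: "M = Max (range (\<lambda>i. proj_grad f w $ i))"
    and M_pos: "M > 0"
    and gamma: "0 < \<gamma>" "\<gamma> < 1"
    and u_simplex: "u \<in> prob_simplex"
    and eta_def: "\<eta> = \<gamma> * (1 / M)"
    and w'_def: "w' = w - \<eta> *\<^sub>R (\<chi> i. w $ i * proj_grad f w $ i)"
  shows "rel_entropy u w' - rel_entropy u w
           \<le> \<eta> * (u \<bullet> proj_grad f w)
             + C_gamma \<gamma> * \<eta>\<^sup>2 * (u \<bullet> (\<chi> i. (proj_grad f w $ i)\<^sup>2))"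
proof -
  define g where "g = proj_grad f w"
  define C where "C = (-ln(1-\<gamma>)-\<gamma>)/\<gamma>\<^sup>2"
  have CC: "C_gamma \<gamma> = C"
    unfolding C_gamma_def C_def using gamma by (simp add: ln_div)
  have u0: "\<And>i. 0 \<le> u $ i" using u_simplex by (simp add: prob_simplex_def)
  have gM: "\<And>i. g $ i \<le> M" unfolding M_def g_def by (rule Max_ge) auto
  have xle: "\<And>i. \<eta> * g $ i \<le> \<gamma>"
  proof -
    fix i
    have "\<eta> * g $ i \<le> \<eta> * M" using gM[of i] eta_def gamma M_pos by (intro mult_left_mono) auto
    thus "\<eta> * g $ i \<le> \<gamma>" using eta_def M_pos by simp
  qed
  have pos1: "\<And>i. 0 < 1 - \<eta> * g $ i" using xle gamma by (smt (verit))
  have w'i: "\<And>i. w' $ i = w $ i * (1 - \<eta> * g $ i)"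
    unfolding w'_def g_def by (simp add: algebra_simps)
  define S where "S = {i. u $ i \<noteq> 0}"
  have termeq: "u $ i * ln (u $ i / w' $ i) - u $ i * ln (u $ i / w $ i) = u $ i * (- ln (1 - \<eta> * g $ i))"
    if "i \<in> S" for i
  proof -
    have ui: "0 < u $ i" using u0[of i] that S_def by (simp add: order_less_le)
    have wi: "0 < w $ i" using w_pos by simp
    have "ln (w' $ i) = ln (w $ i) + ln (1 - \<eta> * g $ i)"
      unfolding w'i using wi pos1[of i] by (simp add: ln_mult)
    moreover have "ln (u $ i / w' $ i) = ln (u $ i) - ln (w' $ i)"
      using ui wi pos1[of i] by (simp add: w'i ln_div)
    moreover have "ln (u $ i / w $ i) = ln (u $ i) - ln (w $ i)"
      using ui wi by (simp add: ln_div)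
    ultimately have "ln (u $ i / w' $ i) - ln (u $ i / w $ i) = - ln (1 - \<eta> * g $ i)" by linarith
    thus ?thesis by (metis right_diff_distrib)
  qed
  have "rel_entropy u w' - rel_entropy u w = (\<Sum>i\<in>S. u $ i * (- ln (1 - \<eta> * g $ i)))"
    unfolding rel_entropy_def S_def[symmetric] sum_subtractf[symmetric] using termeq by (rule sum.cong[OF refl])
  also have "\<dots> \<le> (\<Sum>i\<in>S. u $ i * (\<eta> * g $ i + C * (\<eta> * g $ i)\<^sup>2))"
  proof (rule sum_mono)
    fix i assume "i \<in> S"
    show "u $ i * (- ln (1 - \<eta> * g $ i)) \<le> u $ i * (\<eta> * g $ i + C * (\<eta> * g $ i)\<^sup>2)"
      using aux_key[OF xle[of i] gamma] u0[of i] unfolding C_def by (intro mult_left_mono) auto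
  qed
  also have "\<dots> = (\<Sum>i\<in>UNIV. u $ i * (\<eta> * g $ i + C * (\<eta> * g $ i)\<^sup>2))"
    by (rule sum.mono_neutral_left) (auto simp: S_def)
  also have "\<dots> = \<eta> * (u \<bullet> g) + C * \<eta>\<^sup>2 * (u \<bullet> (\<chi> i. (g $ i)\<^sup>2))"
    by (simp add: inner_vec_def sum.distrib sum_distrib_left algebra_simps power2_eq_square)
  finally show ?thesis unfolding CC g_def .
qed

end
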